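(* Let $1\le p_1\le\cdots\le p_d\le n$ be integers and let $G_0=G_0(p_1,\ldots,p_d)$ be the $d$-uniform $d$-partite hypergraph with vertex classes $V_1,\ldots,V_d$, each identified with $[n]$, in which a $d$-tuple $(x_1,\ldots,x_d)\in[n]^d$ (the edge containing vertex $x_i$ of $V_i$ for each $i$) is a NON-edge if and only if $x_{(i)}\ge p_i$ for every $1\le i\le d$. Then $W_n(p_1,\ldots,p_d)\le \|G_0\|$, where $\|G_0\|$ is the number of edges of $G_0$.
   Context: A $d$-uniform $d$-partite hypergraph has vertex classes $V_1,\ldots,V_d$ and edges that contain exactly one vertex from each class; only such $d$-sets are considered as possible edges. A copy of $K^d_{p_1,\ldots,p_d}$ in $H$ is a permutation $\pi:[d]\to[d]$ together with sets $S_i\subseteq V_i$, $|S_i|=p_{\pi(i)}$, such that all $d$-sets with one vertex from each $S_i$ are edges. $H$ is weakly $K^d_{p_1,\ldots,p_d}$-saturated if its non-edges can be added one at a time in some order so that each added edge creates a new copy of $K^d_{p_1,\ldots,p_d}$ containing that edge. $W_n(p_1,\ldots,p_d)$ is the minimum number of edges in a weakly $K^d_{p_1,\ldots,p_d}$-saturated such hypergraph with $n$ vertices in each class. For $x\in[n]^d$, $x_{(i)}$ is the $i$-th smallest entry of $x$ sorted with repetitions. *)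

theory Defs
  imports Main
begin

text \<open>Vertex classes V_1..V_d are indexed 0..<d, each identified with {1..n}.
 A possible edge (d-set with one vertex per class) is a list x of length d with entries in {1..n}
 (x ! i is the vertex in class i). A hypergraph is a set of such lists.\<close>

definition tuples :: "nat \<Rightarrow> nat \<Rightarrow> nat list set" where
  "tuples d n = {x. length x = d \<and> set x \<subseteq> {1..n}}"

text \<open>A copy of K^d_{p_1..p_d} in H containing the edge e.\<close>
definition copy_containing :: "nat list \<Rightarrow> nat \<Rightarrow> nat list set \<Rightarrow> nat list \<Rightarrow> bool" where
  "copy_containing p n H e \<longleftrightarrow>
     (\<exists>\<pi> S. bij_betw \<pi> {..<length p} {..<length p} \<and>
        (\<forall>i<length p. S i \<subseteq> {1..n} \<and> card (S i) = p ! (\<pi> i) \<and> e ! i \<in> S i) \<and>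
        {x. length x = length p \<and> (\<forall>i<length p. x ! i \<in> S i)} \<subseteq> H)"

definition weakly_saturated :: "nat list \<Rightarrow> nat \<Rightarrow> nat list set \<Rightarrow> bool" where
  "weakly_saturated p n H \<longleftrightarrow>
     H \<subseteq> tuples (length p) n \<and>
     (\<exists>es. distinct es \<and> set es = tuples (length p) n - H \<and>
        (\<forall>j<length es. copy_containing p n (H \<union> set (take (Suc j) es)) (es ! j)))"

definition W :: "nat \<Rightarrow> nat list \<Rightarrow> nat" where
  "W n p = Min {card H | H. weakly_saturated p n H}"

text \<open>G_0: x is a non-edge iff x_(i) \<ge> p_i for all i (sort x ! i is the (i+1)-th smallest entry).\<close>
definition G0 :: "nat list \<Rightarrow> nat \<Rightarrow> nat list set" where
  "G0 p n = {x \<in> tuples (length p) n. \<not> (\<forall>i<length p. sort x ! i \<ge> p ! i)}"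

end

theory Submission
  imports Defs "HOL-Combinatorics.List_Permutation"
begin

lemma sum_lt_aux:
  "length y = length x \<Longrightarrow> (\<forall>i<length x. y ! i \<le> x ! i) \<Longrightarrow> y \<noteq> x
   \<Longrightarrow> sum_list y < sum_list (x::nat list)"
proof (induction x arbitrary: y)
  case Nil then show ?case by simp
next
  case (Cons a x)
  then obtain b y' where y: "y = b # y'" by (cases y) auto
  have h0: "b \<le> a" using Cons.prems y by force
  have h1: "\<forall>i<length x. y' ! i \<le> x ! i" using Cons.prems y by force
  have h2: "sum_list y' \<le> sum_list x"
  proof (cases "y' = x")
    case False then show ?thesis using Cons.IH[of y'] Cons.prems y h1 by force
  qed simp
  show ?case
  proof (cases "y' = x")
    case True then have "b \<noteq> a" using Cons.prems y by auto
    then show ?thesis using h0 True y by simp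
  next
    case False then show ?thesis using Cons.IH[of y'] Cons.prems y h1 h0 by force
  qed
qed

lemma finite_tuples: "finite (tuples d n)"
proof -
  have "tuples d n = {xs. set xs \<subseteq> {1..n} \<and> length xs = d}" unfolding tuples_def by auto
  then show ?thesis using finite_lists_length_eq[of "{1..n}" d] by simp
qed

lemma G0_ws:
  assumes "\<forall>i<length p. 1 \<le> p ! i \<and> p ! i \<le> n"
  shows "weakly_saturated p n (G0 p n)"
proof -
  define d where "d = length p"
  obtain es0 where es0: "distinct es0" "set es0 = tuples d n - G0 p n"
    using finite_distinct_list[of "tuples d n - G0 p n"] finite_tuples by blast
  define es where "es = sort_key sum_list es0"
  have es: "distinct es" "set es = tuples d n - G0 p n" "sorted (map sum_list es)"
    using es0 unfolding es_def by auto
  have ord: "k < j" if "k < length es" "j < length es" "sum_list (es ! k) < sum_list (es ! j)" for k j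
  proof (rule ccontr)
    assume "\<not> k < j"
    then have "j \<le> k" by simp
    then have "(map sum_list es) ! j \<le> (map sum_list es) ! k"
      using es(3) that by (intro sorted_nth_mono) auto
    then show False using that by simp
  qed
  have "copy_containing p n (G0 p n \<union> set (take (Suc j) es)) (es ! j)" if j: "j < length es" for j
  proof -
    define x where "x = es ! j"
    have xin: "x \<in> tuples d n - G0 p n" using es(2) j x_def nth_mem by blast
    then have lx: "length x = d" and sx: "set x \<subseteq> {1..n}" and ge: "\<forall>i<d. sort x ! i \<ge> p ! i"
      unfolding tuples_def G0_def d_def by auto
    have "mset x = mset (sort x)" by simp
    then obtain \<tau> where tau: "bij_betw \<tau> {..<length x} {..<length (sort x)}"
        "\<forall>i<length x. x ! i = sort x ! (\<tau> i)"
      using permutation_Ex_bij by blast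
    have tau': "bij_betw \<tau> {..<d} {..<d}" using tau(1) lx by simp
    have tauin: "\<tau> i < d" if "i < d" for i using tau' that by (auto dest: bij_betwE)
    have xge: "x ! i \<ge> p ! (\<tau> i)" if "i < d" for i
      using tau(2) ge tauin[OF that] that lx by simp
    define S where "S i = {1..<p ! (\<tau> i)} \<union> {x ! i}" for i
    have xi: "x ! i \<in> {1..n}" if "i < d" for i using sx lx that nth_mem by blast
    have props: "S i \<subseteq> {1..n} \<and> card (S i) = p ! (\<tau> i) \<and> x ! i \<in> S i" if "i < d" for i
    proof -
      have pt: "1 \<le> p ! (\<tau> i)" "p ! (\<tau> i) \<le> n" using assms tauin[OF that] d_def by auto
      have "x ! i \<notin> {1..<p ! (\<tau> i)}" using xge[OF that] by simp
      then have "card (S i) = Suc (p ! (\<tau> i) - 1)" unfolding S_def by simp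
      then show ?thesis using pt xi[OF that] unfolding S_def by auto
    qed
    have sub: "{y. length y = length p \<and> (\<forall>i<length p. y ! i \<in> S i)} \<subseteq> G0 p n \<union> set (take (Suc j) es)"
    proof
      fix y assume "y \<in> {y. length y = length p \<and> (\<forall>i<length p. y ! i \<in> S i)}"
      then have ly: "length y = d" and yS: "\<forall>i<d. y ! i \<in> S i" using d_def by auto
      show "y \<in> G0 p n \<union> set (take (Suc j) es)"
      proof (cases "y = x")
        case True
        then show ?thesis using j x_def by (simp add: take_Suc_conv_app_nth)
      next
        case False
        have "y ! i \<in> {1..n}" if "i < d" for i using yS props that by blast
        then have yt: "y \<in> tuples d n"
          unfolding tuples_def using ly by (auto simp: in_set_conv_nth)
        have yle: "\<forall>i<length x. y ! i \<le> x ! i" using yS lx xge unfolding S_def by fastforce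
        have lt: "sum_list y < sum_list x" using sum_lt_aux[OF _ yle False] ly lx by simp
        show ?thesis
        proof (cases "y \<in> G0 p n")
          case False
          then have "y \<in> set es" using es(2) yt by auto
          then obtain k where k: "k < length es" "es ! k = y" by (auto simp: in_set_conv_nth)
          then have "k < j" using ord[OF k(1) j] lt x_def by simp
          then have "y \<in> set (take (Suc j) es)" using k j
            by (auto simp: in_set_conv_nth intro!: exI[of _ k])
          then show ?thesis by simp
        qed simp
      qed
    qed
    show ?thesis unfolding copy_containing_def
      apply (rule exI[of _ \<tau>], rule exI[of _ S])
      using tau' props sub x_def d_def by auto
  qed
  moreover have "G0 p n \<subseteq> tuples (length p) n" unfolding G0_def by auto
  ultimately show ?thesis unfolding weakly_saturated_def using es d_def by blast
qed

theorem lemma1: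
  fixes p :: "nat list" and n :: nat
  assumes "sorted p" and "\<forall>i<length p. 1 \<le> p ! i \<and> p ! i \<le> n"
  shows "W n p \<le> card (G0 p n)"
proof -
  have fin: "finite {card H | H. weakly_saturated p n H}"
  proof (rule finite_subset[of _ "{..card (tuples (length p) n)}"])
    show "{card H | H. weakly_saturated p n H} \<subseteq> {..card (tuples (length p) n)}"
      using finite_tuples by (auto simp: weakly_saturated_def intro: card_mono)
  qed simp
  show ?thesis unfolding W_def
    using G0_ws[OF assms(2)] by (intro Min_le[OF fin]) blast
qed

end
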